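(* Let $(c_d)_{d\ge 0}$ be nonnegative integers, $(p_d)_{d\ge0}\subset[0,1]$, and for each $d\ge 0$ let $F_d$ be a cumulative distribution function of a random variable taking values in the nonnegative integers $\{0,1,2,\dots\}$. For each $t\in\mathbb{N}$, let $\{M_{d,i}(t)\}$, $0\le d\le t$, $1\le i\le c_d$, be independent random variables with $M_{d,i}(t)\sim \mathrm{Bernoulli}\big(p_d F_d(t-d)\big)$. Let $r_t=\sum_{d=0}^t c_d$ and assume $r_t\to\infty$ as $t\to\infty$. Define $$CFR(t)=\frac{1}{r_t}\sum_{d=0}^t \frac{\sum_{i=1}^{c_d} M_{d,i}(t)}{F_d(t-d)},\qquad cfr(t)=\frac{\sum_{d=0}^t c_d p_d}{r_t},$$ $$V(CFR(t))=\frac{\sum_{d=0}^t c_d\, p_d\big(1-p_dF_d(t-d)\big)/F_d(t-d)}{r_t^2}.$$ Consider the assumptions (A1) $\inf_{d} F_d(0)=D>0$; (A2) $\inf_d p_d = I>0$; (A3) $\sup_d p_d = S<1$. Then: (i) If (A1) holds, then $CFR(t)-cfr(t)\to 0$ in probability as $t\to\infty$. (ii) If (A1), (A2) and (A3) hold, then $\dfrac{CFR(t)-cfr(t)}{\sqrt{V(CFR(t))}}$ converges in distribution to the standard normal distribution $N(0,1)$ as $t\to\infty$.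
   Context: Interpretation (for orientation only): $c_d$ is the number of cases of a disease confirmed on day $d$, $p_d$ is the probability of eventually dying from the disease for a case confirmed on day $d$, $F_d$ is the distribution function of the number of days from confirmation to death for cases confirmed on day $d$ that die, and $M_{d,i}(t)$ indicates whether the $i$-th case confirmed on day $d$ has died of the disease by day $t$. The quantity $cfr(t)$ is the case fatality rate by day $t$ and $CFR(t)$ is its proposed estimator; $V(CFR(t))$ equals the variance of $CFR(t)$. Under (A1), $F_d(t-d)\ge F_d(0)>0$, so $CFR(t)$ is well defined. *)

theory Defs
  imports "HOL-Probability.Probability"
begin

definition nat_cdf :: "nat pmf \<Rightarrow> nat \<Rightarrow> real" where
  "nat_cdf Q k = measure_pmf.prob Q {..k}"

definition rcases :: "(nat \<Rightarrow> nat) \<Rightarrow> nat \<Rightarrow> nat" where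
  "rcases c t = (\<Sum>d\<le>t. c d)"

text \<open>The estimator CFR(t); X t d i is the indicator M_{d,i}(t) (as a boolean).\<close>
definition CFR_est :: "(nat \<Rightarrow> nat) \<Rightarrow> (nat \<Rightarrow> nat \<Rightarrow> real)
    \<Rightarrow> (nat \<Rightarrow> nat \<Rightarrow> nat \<Rightarrow> 'a \<Rightarrow> bool) \<Rightarrow> nat \<Rightarrow> 'a \<Rightarrow> real" where
  "CFR_est c F X t \<omega> =
     (\<Sum>d\<le>t. (\<Sum>i=1..c d. of_bool (X t d i \<omega>)) / F d (t - d)) / real (rcases c t)"

definition cfr_true :: "(nat \<Rightarrow> nat) \<Rightarrow> (nat \<Rightarrow> real) \<Rightarrow> nat \<Rightarrow> real" where
  "cfr_true c p t = (\<Sum>d\<le>t. real (c d) * p d) / real (rcases c t)"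

definition V_CFR :: "(nat \<Rightarrow> nat) \<Rightarrow> (nat \<Rightarrow> real) \<Rightarrow> (nat \<Rightarrow> nat \<Rightarrow> real) \<Rightarrow> nat \<Rightarrow> real" where
  "V_CFR c p F t =
     (\<Sum>d\<le>t. real (c d) * p d * (1 - p d * F d (t - d)) / F d (t - d)) / (real (rcases c t))\<^sup>2"

end

theory Submission
  imports Defs
begin


lemma iexp_R_bound:
  "cmod (iexp x - (1 + \<i> * complex_of_real x - complex_of_real (x^2/2))) \<le> \<bar>x\<bar>^3 / 6"
proof -
  have "(\<Sum>k \<le> 2. (\<i> * complex_of_real x)^k / fact k) = 1 + \<i> * complex_of_real x - complex_of_real (x^2/2)"
    by (simp add: numeral_2_eq_2 power2_eq_square field_simps)
  moreover have "fact (Suc 2) = (6::real)" by (simp add: numeral_3_eq_3 numeral_2_eq_2)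
  ultimately show ?thesis using iexp_approx1[of x 2] by (simp add: numeral_3_eq_3)
qed

lemma phi_alg: "(1 - of_real q) * E1 + of_real q * E2
            - of_real (1 - u^2 * (a^2*q*(1-q)) / 2) = of_real (1-q) * (E1 - (1 + \<i> * complex_of_real (-u*a*q) - complex_of_real ((-u*a*q)^2/2)))
   + of_real q * (E2 - (1 + \<i> * complex_of_real (u*a*(1-q)) - complex_of_real ((u*a*(1-q))^2/2)))"
  apply (simp only: of_real_mult of_real_diff of_real_divide of_real_power of_real_minus of_real_1 of_real_numeral)
  apply (simp add: field_simps)
  apply (simp add: algebra_simps power2_eq_square)
  done

lemma phi_bound:
  fixes q a u :: real
  assumes q: "0 \<le> q" "q \<le> 1"
  shows "cmod ((1 - of_real q) * iexp (-u*a*q) + of_real q * iexp (u*a*(1-q))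
            - of_real (1 - u^2 * (a^2*q*(1-q)) / 2)) \<le> \<bar>u\<bar>^3 * \<bar>a\<bar> * (a^2*q*(1-q)) / 6"
proof -
  define R where "R = (\<lambda>x. iexp x - (1 + \<i> * complex_of_real x - complex_of_real (x^2/2)))"
  have eq: "(1 - of_real q) * iexp (-u*a*q) + of_real q * iexp (u*a*(1-q))
            - of_real (1 - u^2 * (a^2*q*(1-q)) / 2) = of_real (1-q) * R (-u*a*q) + of_real q * R (u*a*(1-q))"
    unfolding R_def by (rule phi_alg)
  have "cmod (of_real (1-q) * R (-u*a*q) + of_real q * R (u*a*(1-q))) \<le>
      (1-q) * cmod (R (-u*a*q)) + q * cmod (R (u*a*(1-q)))"
    using q by (metis (no_types, lifting) abs_of_nonneg diff_ge_0_iff_ge norm_mult norm_of_real norm_triangle_ineq)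
  also have "\<dots> \<le> (1-q) * (\<bar>-u*a*q\<bar>^3/6) + q * (\<bar>u*a*(1-q)\<bar>^3/6)"
    unfolding R_def using q by (intro add_mono mult_left_mono iexp_R_bound) auto
  also have "\<dots> = \<bar>u\<bar>^3 * \<bar>a\<bar>^3 * (q*(1-q)) * (q^2 + (1-q)^2) / 6"
  proof -
    have e1: "\<bar>-u*a*q\<bar> = \<bar>u\<bar>*\<bar>a\<bar>*q" and e2: "\<bar>u*a*(1-q)\<bar> = \<bar>u\<bar>*\<bar>a\<bar>*(1-q)"
      using q by (simp_all add: abs_mult)
    have "\<And>U A::real. (1-q) * ((U*A*q)^3/6) + q * ((U*A*(1-q))^3/6) = U^3 * A^3 * (q*(1-q)) * (q^2 + (1-q)^2) / 6"
      by (simp add: power3_eq_cube power2_eq_square field_simps)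
    thus ?thesis unfolding e1 e2 .
  qed
  also have "\<dots> \<le> \<bar>u\<bar>^3 * \<bar>a\<bar>^3 * (q*(1-q)) * 1 / 6"
  proof -
    have "q*(1-q) \<ge> 0" using q by simp
    hence "q^2 + (1-q)^2 \<le> 1" by (simp add: power2_eq_square algebra_simps)
    thus ?thesis using q by (intro divide_right_mono mult_left_mono) auto
  qed
  also have "\<dots> = \<bar>u\<bar>^3 * \<bar>a\<bar> * (a^2*q*(1-q)) / 6"
    by (simp add: power3_eq_cube power2_eq_square)
  finally show ?thesis using eq by simp
qed

lemma exp_minus_quad:
  fixes y :: real assumes "0 \<le> y"
  shows "\<bar>exp (-y) - (1 - y)\<bar> \<le> y^2"
proof -
  have l: "1 - y \<le> exp (-y)" using exp_ge_add_one_self[of "-y"] by simp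
  have a: "exp (-y) \<le> 1 / (1+y)"
    using exp_ge_add_one_self[of y] assms by (simp add: exp_minus field_simps)
  have b: "1/(1+y) - (1-y) = y^2/(1+y)" using assms by (simp add: field_simps power2_eq_square)
  have c: "y^2/(1+y) \<le> y^2"
  proof -
    have "y^2 \<le> y^2*(1+y)" using assms by (simp add: algebra_simps)
    thus ?thesis using assms by (simp add: divide_le_eq)
  qed
  show ?thesis using l a b c by linarith
qed

lemma clt_core:
  fixes u \<beta> :: real and J :: "'j set" and q a :: "'j \<Rightarrow> real"
  assumes fin: "finite J" and q: "\<And>j. j\<in>J \<Longrightarrow> 0 \<le> q j \<and> q j \<le> 1"
    and ab: "\<And>j. j\<in>J \<Longrightarrow> \<bar>a j\<bar> \<le> \<beta>"
    and s1: "(\<Sum>j\<in>J. a j^2 * q j * (1 - q j)) = 1"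
  shows "cmod ((\<Prod>j\<in>J. (1 - of_real (q j)) * iexp (-u*a j*q j) + of_real (q j) * iexp (u*a j*(1-q j)))
           - of_real (exp (- (u^2) / 2))) \<le> \<bar>u\<bar>^3*\<beta>/6 + u^4*\<beta>^2"
proof -
  define s where "s = (\<lambda>j. a j^2 * q j * (1 - q j))"
  define \<phi> where "\<phi> = (\<lambda>j. (1 - of_real (q j)) * iexp (-u*a j*q j) + of_real (q j) * iexp (u*a j*(1-q j)))"
  define w where "w = (\<lambda>j. complex_of_real (exp (-(u^2 * s j / 2))))"
  have s0: "s j \<ge> 0" if "j \<in> J" for j using q[OF that] unfolding s_def by simp
  have sb: "s j \<le> \<beta>^2/4" if "j \<in> J" for j
  proof -
    have "q j * (1 - q j) \<le> 1/4"
    proof -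
      have "0 \<le> (q j - 1/2)^2" by simp
      thus ?thesis by (simp add: power2_eq_square algebra_simps)
    qed
    moreover have "a j^2 \<le> \<beta>^2"
      using ab[OF that] by (metis abs_ge_zero power2_abs power_mono)
    moreover have "q j * (1 - q j) \<ge> 0" using q[OF that] by simp
    ultimately have "a j^2 * (q j * (1 - q j)) \<le> \<beta>^2 * (1/4)"
      by (intro mult_mono) auto
    thus ?thesis unfolding s_def by (simp add: mult.assoc)
  qed
  have "exp (- (u^2) / 2) = exp (\<Sum>j\<in>J. -(u^2 * s j / 2))"
  proof -
    have "(\<Sum>j\<in>J. -(u^2 * s j / 2)) = -(u^2/2) * (\<Sum>j\<in>J. s j)"
      by (simp add: sum_distrib_left sum_negf)
    also have "\<dots> = - (u^2) / 2" using s1 unfolding s_def by simp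
    finally show ?thesis by simp
  qed
  also have "\<dots> = (\<Prod>j\<in>J. exp (-(u^2 * s j / 2)))" using fin by (simp add: exp_sum)
  finally have ew: "complex_of_real (exp (- (u^2) / 2)) = (\<Prod>j\<in>J. w j)"
    unfolding w_def by simp
  have n\<phi>: "norm (\<phi> j) \<le> 1" if "j \<in> J" for j
  proof -
    have "norm (\<phi> j) \<le> norm ((1 - of_real (q j)) * iexp (-u*a j*q j)) + norm (of_real (q j) * iexp (u*a j*(1-q j)))"
      unfolding \<phi>_def by (rule norm_triangle_ineq)
    also have "\<dots> = (1 - q j) + q j"
    proof -
      have "(1 - complex_of_real (q j)) = complex_of_real (1 - q j)" by simp
      thus ?thesis using q[OF that] by (simp only: norm_mult norm_of_real norm_exp_i_times) simp
    qed
    finally show ?thesis by simp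
  qed
  have nw: "norm (w j) \<le> 1" if "j \<in> J" for j
    using s0[OF that] unfolding w_def by simp
  have "cmod ((\<Prod>j\<in>J. \<phi> j) - (\<Prod>j\<in>J. w j)) \<le> (\<Sum>j\<in>J. cmod (\<phi> j - w j))"
    by (rule norm_prod_diff) (auto intro: n\<phi> nw)
  also have "\<dots> \<le> (\<Sum>j\<in>J. (\<bar>u\<bar>^3*\<beta>/6 + u^4*\<beta>^2) * s j)"
  proof (rule sum_mono)
    fix j assume j: "j \<in> J"
    have "cmod (\<phi> j - w j) \<le> cmod (\<phi> j - of_real (1 - u^2 * s j / 2)) + cmod (of_real (1 - u^2 * s j / 2) - w j)"
      using norm_triangle_ineq[of "\<phi> j - of_real (1 - u^2 * s j / 2)" "of_real (1 - u^2 * s j / 2) - w j"] by simp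
    also have "cmod (\<phi> j - of_real (1 - u^2 * s j / 2)) \<le> \<bar>u\<bar>^3 * \<bar>a j\<bar> * s j / 6"
      using phi_bound[of "q j" u "a j"] q[OF j] unfolding \<phi>_def s_def by simp
    also have "cmod (of_real (1 - u^2 * s j / 2) - w j) = \<bar>exp (-(u^2 * s j / 2)) - (1 - u^2 * s j / 2)\<bar>"
      unfolding w_def by (metis norm_minus_commute norm_of_real of_real_diff)
    also have "\<dots> \<le> (u^2 * s j / 2)^2"
      by (rule exp_minus_quad) (use s0[OF j] in simp)
    also have "\<bar>u\<bar>^3 * \<bar>a j\<bar> * s j / 6 \<le> \<bar>u\<bar>^3 * \<beta> * s j / 6"
      using ab[OF j] s0[OF j] by (intro divide_right_mono mult_right_mono mult_left_mono) auto
    also have "(u^2 * s j / 2)^2 = u^4 * s j * (s j / 4)"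
      by (simp add: power2_eq_square power4_eq_xxxx field_simps)
    also have "\<dots> \<le> u^4 * s j * \<beta>^2"
    proof -
      have "s j / 4 \<le> \<beta>^2" using sb[OF j] s0[OF j] by simp
      thus ?thesis using s0[OF j] by (intro mult_left_mono) auto
    qed
    finally show "cmod (\<phi> j - w j) \<le> (\<bar>u\<bar>^3*\<beta>/6 + u^4*\<beta>^2) * s j"
      by (simp add: algebra_simps)
  qed
  also have "\<dots> = \<bar>u\<bar>^3*\<beta>/6 + u^4*\<beta>^2"
    using s1 unfolding s_def by (simp flip: sum_distrib_left)
  finally show ?thesis unfolding ew \<phi>_def .
qed




locale cfr_setting = prob_space M for M :: "'a measure" +
  fixes c :: "nat \<Rightarrow> nat" and p :: "nat \<Rightarrow> real" and Q :: "nat \<Rightarrow> nat pmf"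
    and X :: "nat \<Rightarrow> nat \<Rightarrow> nat \<Rightarrow> 'a \<Rightarrow> bool"
  assumes p_range: "\<And>d. 0 \<le> p d \<and> p d \<le> 1"
    and indep: "\<And>t. indep_vars (\<lambda>_. count_space UNIV) (\<lambda>(d, i). X t d i)
                   {(d, i). d \<le> t \<and> 1 \<le> i \<and> i \<le> c d}"
    and bern: "\<And>t d i. d \<le> t \<Longrightarrow> 1 \<le> i \<Longrightarrow> i \<le> c d \<Longrightarrow>
                 distr M (count_space UNIV) (X t d i)
                   = measure_pmf (bernoulli_pmf (p d * nat_cdf (Q d) (t - d)))"
    and r_infty: "filterlim (rcases c) at_top sequentially"
    and Fpos: "(INF d. nat_cdf (Q d) 0) > 0"
begin

abbreviation "D \<equiv> (INF d. nat_cdf (Q d) 0)"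
definition "J t = {(d, i). d \<le> t \<and> 1 \<le> i \<and> i \<le> c d}"
definition "q t d = p d * nat_cdf (Q d) (t - d)"
definition "Yh t j b = (of_bool b - q t (fst j)) / nat_cdf (Q (fst j)) (t - fst j) / real (rcases c t)"
definition "Y t j \<omega> = Yh t j (X t (fst j) (snd j) \<omega>)"

lemma F_nonneg: "0 \<le> nat_cdf (Q d) k"
  unfolding nat_cdf_def by simp

lemma F_le1: "nat_cdf (Q d) k \<le> 1"
  unfolding nat_cdf_def by simp

lemma F_ge_D: "D \<le> nat_cdf (Q d) k"
proof -
  have "D \<le> nat_cdf (Q d) 0"
    by (rule cINF_lower) (auto intro!: bdd_belowI2[where m=0] F_nonneg)
  also have "\<dots> \<le> nat_cdf (Q d) k"
    unfolding nat_cdf_def by (rule measure_pmf.finite_measure_mono) auto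
  finally show ?thesis .
qed

lemma F_pos: "0 < nat_cdf (Q d) k"
  using F_ge_D Fpos by (rule order.strict_trans2[rotated])

lemma q_range: "0 \<le> q t d" "q t d \<le> 1"
  using p_range[of d] F_nonneg[of d "t-d"] F_le1[of d "t-d"] unfolding q_def
  by (auto intro: mult_le_one)

lemma J_Sigma: "J t = Sigma {..t} (\<lambda>d. {1..c d})"
  unfolding J_def by auto

lemma J_finite: "finite (J t)"
  unfolding J_Sigma by auto

lemma J_card: "card (J t) = rcases c t"
  unfolding J_Sigma rcases_def by (subst card_SigmaI) auto

lemma indep': "indep_vars (\<lambda>_. count_space UNIV) (\<lambda>j. X t (fst j) (snd j)) (J t)"
proof -
  have "(\<lambda>(d, i). X t d i) = (\<lambda>j. X t (fst j) (snd j))" by (auto simp: fun_eq_iff)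
  thus ?thesis using indep[of t] unfolding J_def by simp
qed

lemma measX: "j \<in> J t \<Longrightarrow> X t (fst j) (snd j) \<in> measurable M (count_space UNIV)"
  using indep'[of t] unfolding indep_vars_def by auto

lemma indep_h:
  "indep_vars (\<lambda>_. borel) (\<lambda>j \<omega>. h j (X t (fst j) (snd j) \<omega>)) (J t)"
  by (rule indep_vars_compose2[OF indep']) simp

lemma intX:
  fixes g :: "bool \<Rightarrow> 'b::{banach, second_countable_topology}"
  assumes j: "j \<in> J t"
  shows "integral\<^sup>L M (\<lambda>\<omega>. g (X t (fst j) (snd j) \<omega>)) = q t (fst j) *\<^sub>R g True + (1 - q t (fst j)) *\<^sub>R g False"
proof -
  have "integral\<^sup>L M (\<lambda>\<omega>. g (X t (fst j) (snd j) \<omega>)) = integral\<^sup>L (distr M (count_space UNIV) (X t (fst j) (snd j))) g"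
    by (rule integral_distr[symmetric]) (use measX[OF j] in auto)
  also have "\<dots> = integral\<^sup>L (measure_pmf (bernoulli_pmf (q t (fst j)))) g"
    using j bern[of "fst j" t "snd j"] unfolding J_def q_def by auto
  also have "\<dots> = (\<Sum>a\<in>UNIV. pmf (bernoulli_pmf (q t (fst j))) a *\<^sub>R g a)"
    by (rule integral_measure_pmf) auto
  also have "\<dots> = q t (fst j) *\<^sub>R g True + (1 - q t (fst j)) *\<^sub>R g False"
    using q_range[of t "fst j"] by (simp add: UNIV_bool)
  finally show ?thesis .
qed

lemma measY: "j \<in> J t \<Longrightarrow> Y t j \<in> borel_measurable M"
  unfolding Y_def by (rule measurable_compose[OF measX]) auto

lemma eqY: "CFR_est c (\<lambda>d. nat_cdf (Q d)) X t \<omega> - cfr_true c p t = (\<Sum>j\<in>J t. Y t j \<omega>)"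
proof -
  let ?F = "\<lambda>d. nat_cdf (Q d) (t - d)"
  let ?r = "real (rcases c t)"
  have "(\<Sum>j\<in>J t. Y t j \<omega>) = (\<Sum>d\<le>t. \<Sum>i\<in>{1..c d}. Y t (d, i) \<omega>)"
    unfolding J_Sigma by (subst sum.Sigma) auto
  also have "\<dots> = (\<Sum>d\<le>t. ((\<Sum>i=1..c d. of_bool (X t d i \<omega>)) / ?F d - real (c d) * p d) / ?r)"
  proof (rule sum.cong[OF refl])
    fix d assume "d \<in> {..t}"
    have "(\<Sum>i\<in>{1..c d}. Y t (d, i) \<omega>) = (\<Sum>i\<in>{1..c d}. (of_bool (X t d i \<omega>) - q t d) / ?F d / ?r)"
      unfolding Y_def Yh_def by simp
    also have "\<dots> = ((\<Sum>i=1..c d. of_bool (X t d i \<omega>)) - real (c d) * q t d) / ?F d / ?r"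
      by (simp add: sum_divide_distrib[symmetric] sum_subtractf)
    also have "real (c d) * q t d / ?F d = real (c d) * p d"
      using F_pos[of d "t-d"] unfolding q_def by simp
    hence "((\<Sum>i=1..c d. of_bool (X t d i \<omega>)) - real (c d) * q t d) / ?F d
         = (\<Sum>i=1..c d. of_bool (X t d i \<omega>)) / ?F d - real (c d) * p d"
      by (simp add: diff_divide_distrib)
    finally show "(\<Sum>i\<in>{1..c d}. Y t (d, i) \<omega>) = ((\<Sum>i=1..c d. of_bool (X t d i \<omega>)) / ?F d - real (c d) * p d) / ?r"
      by simp
  qed
  also have "\<dots> = (\<Sum>d\<le>t. (\<Sum>i=1..c d. of_bool (X t d i \<omega>)) / ?F d) / ?r - (\<Sum>d\<le>t. real (c d) * p d) / ?r"
    by (simp only: diff_divide_distrib sum_divide_distrib sum_subtractf)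
  also have "\<dots> = CFR_est c (\<lambda>d. nat_cdf (Q d)) X t \<omega> - cfr_true c p t"
    unfolding CFR_est_def cfr_true_def by simp
  finally show ?thesis ..
qed

lemma EY: "j \<in> J t \<Longrightarrow> expectation (Y t j) = 0"
  unfolding Y_def[abs_def] by (subst intX) (auto simp: Yh_def diff_divide_distrib algebra_simps)

lemma r_real: "filterlim (\<lambda>t. real (rcases c t)) at_top sequentially"
  by (rule filterlim_compose[OF filterlim_real_sequentially r_infty])

lemma ev_r1: "eventually (\<lambda>t. rcases c t \<ge> 1) sequentially"
  using r_infty by (simp add: filterlim_at_top)

lemma exp_lim: "k > 0 \<Longrightarrow> (\<lambda>t. exp (-(k * real (rcases c t)))) \<longlonglongrightarrow> 0"
proof -
  assume k: "k > 0"
  have "filterlim (\<lambda>t. k * real (rcases c t)) at_top sequentially"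
    by (rule filterlim_tendsto_pos_mult_at_top[OF tendsto_const k r_real])
  hence "filterlim (\<lambda>t. -(k * real (rcases c t))) at_bot sequentially"
    by (simp add: filterlim_uminus_at_top[symmetric])
  thus ?thesis by (rule filterlim_compose[OF exp_at_bot])
qed

lemma Yh_bounds: "Yh t j False \<le> Yh t j b \<and> Yh t j b \<le> Yh t j True"
proof -
  have "0 < nat_cdf (Q (fst j)) (t - fst j) * real (rcases c t) \<or> real (rcases c t) = 0"
    using F_pos[of "fst j" "t - fst j"] by auto
  thus ?thesis unfolding Yh_def by (cases b) (auto simp: field_simps)
qed

lemma part1_bound:
  assumes r: "rcases c t \<ge> 1" and e: "e > 0"
  shows "measure M {\<omega>\<in>space M. \<bar>CFR_est c (\<lambda>d. nat_cdf (Q d)) X t \<omega> - cfr_true c p t\<bar> > e}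
     \<le> 2 * exp (-(2*e^2*D^2 * real (rcases c t)))"
proof -
  interpret H: Hoeffding_ineq M "J t" "Y t" "\<lambda>j. Yh t j False" "\<lambda>j. Yh t j True" "\<Sum>j\<in>J t. expectation (Y t j)"
  proof unfold_locales
    show "finite (J t)" by (rule J_finite)
    show "indep_vars (\<lambda>_. borel) (Y t) (J t)"
      unfolding Y_def[abs_def] by (rule indep_h)
    fix j assume "j \<in> J t"
    show "AE x in M. Y t j x \<in> {Yh t j False..Yh t j True}"
      by (rule AE_I2) (simp add: Y_def Yh_bounds)
  qed simp
  have mu0: "(\<Sum>j\<in>J t. expectation (Y t j)) = 0" by (simp add: EY)
  define S where "S = (\<Sum>j\<in>J t. (Yh t j True - Yh t j False)\<^sup>2)"
  have rpos: "real (rcases c t) > 0" using r by simp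
  have Dpos: "D > 0" by (rule Fpos)
  have tm: "(Yh t j True - Yh t j False)\<^sup>2 = (1 / (nat_cdf (Q (fst j)) (t - fst j) * real (rcases c t)))^2" for j
    unfolding Yh_def by (simp add: add_divide_distrib[symmetric])
  have Sle: "S \<le> 1 / (D^2 * real (rcases c t))"
  proof -
    have "S \<le> (\<Sum>j\<in>J t. (1 / (D * real (rcases c t)))^2)"
      unfolding S_def tm
    proof (rule sum_mono)
      fix j
      have "1 / (nat_cdf (Q (fst j)) (t - fst j) * real (rcases c t)) \<le> 1 / (D * real (rcases c t))"
        using F_ge_D[of "fst j" "t - fst j"] Dpos rpos
        by (intro divide_left_mono mult_right_mono mult_pos_pos) auto
      moreover have "0 \<le> 1 / (nat_cdf (Q (fst j)) (t - fst j) * real (rcases c t))"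
        using F_nonneg[of "fst j" "t - fst j"] by simp
      ultimately show "(1 / (nat_cdf (Q (fst j)) (t - fst j) * real (rcases c t)))^2 \<le> (1 / (D * real (rcases c t)))^2"
        by (rule power_mono)
    qed
    also have "\<dots> = real (rcases c t) * (1 / (D * real (rcases c t)))^2"
      by (simp add: J_card)
    also have "\<dots> = 1 / (D^2 * real (rcases c t))"
      using rpos by (simp add: power2_eq_square field_simps)
    finally show ?thesis .
  qed
  have Spos: "S > 0"
  proof -
    have "J t \<noteq> {}" using J_card[of t] r by auto
    then obtain j where j: "j \<in> J t" by auto
    have "0 < (1 / (nat_cdf (Q (fst j)) (t - fst j) * real (rcases c t)))^2"
      using F_pos[of "fst j" "t - fst j"] rpos by simp
    also have "\<dots> \<le> S" unfolding S_def tm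
      by (rule member_le_sum[OF j]) (auto simp: J_finite)
    finally show ?thesis .
  qed
  have "-2 * e\<^sup>2 / S \<le> -(2*e^2*D^2 * real (rcases c t))"
  proof -
    have "D^2 * real (rcases c t) \<le> 1 / S"
      using Sle Spos Dpos rpos by (simp add: field_simps)
    hence "2*e^2 * (D^2 * real (rcases c t)) \<le> 2*e^2 * (1 / S)"
      by (intro mult_left_mono) auto
    thus ?thesis by (simp add: field_simps)
  qed
  have meas: "{x \<in> space M. e \<le> \<bar>(\<Sum>j\<in>J t. Y t j x) - (\<Sum>j\<in>J t. expectation (Y t j))\<bar>} \<in> sets M"
  proof -
    have "(\<lambda>x. \<bar>(\<Sum>j\<in>J t. Y t j x) - (\<Sum>j\<in>J t. expectation (Y t j))\<bar>) \<in> borel_measurable M"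
      by (intro borel_measurable_abs borel_measurable_diff borel_measurable_sum borel_measurable_const measY)
    thus ?thesis unfolding borel_measurable_iff_ge by blast
  qed
  have "measure M {\<omega>\<in>space M. \<bar>CFR_est c (\<lambda>d. nat_cdf (Q d)) X t \<omega> - cfr_true c p t\<bar> > e}
     \<le> measure M {x \<in> space M. e \<le> \<bar>(\<Sum>j\<in>J t. Y t j x) - (\<Sum>j\<in>J t. expectation (Y t j))\<bar>}"
    by (rule finite_measure_mono[OF _ meas]) (auto simp: eqY mu0)
  also have "\<dots> \<le> 2 * exp (-2 * e\<^sup>2 / (\<Sum>j\<in>J t. (Yh t j True - Yh t j False)\<^sup>2))"
    using H.Hoeffding_ineq_abs_ge[of e] e Spos unfolding S_def by simp
  also have "\<dots> \<le> 2 * exp (-(2*e^2*D^2 * real (rcases c t)))"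
    using \<open>-2 * e\<^sup>2 / S \<le> _\<close> unfolding S_def by simp
  finally show ?thesis .
qed

lemma part1:
  assumes e: "e > 0"
  shows "(\<lambda>t. measure M {\<omega>\<in>space M. \<bar>CFR_est c (\<lambda>d. nat_cdf (Q d)) X t \<omega> - cfr_true c p t\<bar> > e}) \<longlonglongrightarrow> 0"
proof (rule tendsto_sandwich[OF _ _ tendsto_const])
  show "\<forall>\<^sub>F n in sequentially. 0 \<le> measure M {\<omega>\<in>space M. \<bar>CFR_est c (\<lambda>d. nat_cdf (Q d)) X n \<omega> - cfr_true c p n\<bar> > e}"
    by simp
  show "\<forall>\<^sub>F n in sequentially. measure M {\<omega>\<in>space M. \<bar>CFR_est c (\<lambda>d. nat_cdf (Q d)) X n \<omega> - cfr_true c p n\<bar> > e}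
     \<le> 2 * exp (-(2*e^2*D^2 * real (rcases c n)))"
    using ev_r1 by eventually_elim (rule part1_bound[OF _ e])
  have "2*e^2*D^2 > 0" using e Fpos by simp
  from tendsto_mult_right_zero[OF exp_lim[OF this], of 2]
  show "(\<lambda>n. 2 * exp (-(2*e^2*D^2 * real (rcases c n)))) \<longlonglongrightarrow> 0" by simp
qed

abbreviation "Ip \<equiv> (INF d. p d)"
abbreviation "Sp \<equiv> (SUP d. p d)"

lemma p_ge_I: "Ip \<le> p d"
  by (rule cINF_lower) (auto intro!: bdd_belowI2[where m=0] simp: p_range)

lemma p_le_S: "p d \<le> Sp"
  by (rule cSUP_upper) (auto intro!: bdd_aboveI2[where M=1] simp: p_range)

definition "N t = (\<Sum>d\<le>t. real (c d) * p d * (1 - p d * nat_cdf (Q d) (t - d)) / nat_cdf (Q d) (t - d))"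

lemma V_N: "V_CFR c p (\<lambda>d. nat_cdf (Q d)) t = N t / (real (rcases c t))^2"
  by (simp add: V_CFR_def N_def)

lemma sum_J: "(\<Sum>j\<in>J t. f j) = (\<Sum>d\<le>t. \<Sum>i\<in>{1..c d}. f (d, i))"
  unfolding J_Sigma by (subst sum.Sigma) auto

lemma N_J: "(\<Sum>j\<in>J t. q t (fst j) * (1 - q t (fst j)) / (nat_cdf (Q (fst j)) (t - fst j))^2) = N t"
  unfolding sum_J N_def
proof (rule sum.cong[OF refl])
  fix d
  have F: "nat_cdf (Q d) (t - d) > 0" by (rule F_pos)
  have "(\<Sum>i\<in>{1..c d}. q t (fst (d, i)) * (1 - q t (fst (d, i))) / (nat_cdf (Q (fst (d, i))) (t - fst (d, i)))\<^sup>2)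
     = real (c d) * (q t d * (1 - q t d) / (nat_cdf (Q d) (t - d))\<^sup>2)" by simp
  also have "\<dots> = real (c d) * p d * (1 - p d * nat_cdf (Q d) (t - d)) / nat_cdf (Q d) (t - d)"
    using F unfolding q_def by (simp add: power2_eq_square field_simps)
  finally show "(\<Sum>i\<in>{1..c d}. q t (fst (d, i)) * (1 - q t (fst (d, i))) / (nat_cdf (Q (fst (d, i))) (t - fst (d, i)))\<^sup>2)
     = real (c d) * p d * (1 - p d * nat_cdf (Q d) (t - d)) / nat_cdf (Q d) (t - d)" .
qed

lemma N_lower:
  assumes I: "Ip > 0" and S: "Sp < 1"
  shows "real (rcases c t) * (Ip * (1 - Sp)) \<le> N t"
proof -
  have "real (rcases c t) * (Ip * (1 - Sp)) = (\<Sum>d\<le>t. real (c d) * (Ip * (1 - Sp)))"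
    by (simp add: rcases_def sum_distrib_right)
  also have "\<dots> \<le> N t" unfolding N_def
  proof (rule sum_mono)
    fix d
    let ?F = "nat_cdf (Q d) (t - d)"
    have F: "0 < ?F" "?F \<le> 1" by (rule F_pos, rule F_le1)
    have pF: "p d * ?F \<le> p d" using F p_range[of d] by (simp add: mult_left_le)
    have pS: "p d * ?F \<le> Sp" using pF p_le_S[of d] by linarith
    have "Ip * (1 - Sp) \<le> p d * (1 - p d * ?F)"
      using p_ge_I[of d] pS I S by (intro mult_mono) auto
    also have "\<dots> \<le> p d * (1 - p d * ?F) / ?F"
    proof -
      have "0 \<le> p d * (1 - p d * ?F)" using pF p_range[of d] p_le_S[of d] S by simp
      thus ?thesis using F by (simp add: le_divide_eq mult_left_le)
    qed
    finally have "real (c d) * (Ip * (1 - Sp)) \<le> real (c d) * (p d * (1 - p d * ?F) / ?F)"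
      by (rule mult_left_mono) simp
    thus "real (c d) * (Ip * (1 - Sp)) \<le> real (c d) * p d * (1 - p d * ?F) / ?F"
      by (simp only: times_divide_eq_right mult.assoc)
  qed
  finally show ?thesis .
qed

lemma char_bound:
  assumes I: "Ip > 0" and S: "Sp < 1" and r: "rcases c t \<ge> 1"
  shows "cmod (char (distr M borel (\<lambda>\<omega>. (CFR_est c (\<lambda>d. nat_cdf (Q d)) X t \<omega> - cfr_true c p t)
                   / sqrt (V_CFR c p (\<lambda>d. nat_cdf (Q d)) t))) u - complex_of_real (exp (- (u^2) / 2)))
     \<le> \<bar>u\<bar>^3 * (1 / (D * sqrt (N t))) / 6 + u^4 * (1 / (D * sqrt (N t)))^2"
proof -
  define sV where "sV = sqrt (V_CFR c p (\<lambda>d. nat_cdf (Q d)) t)"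
  define rr where "rr = real (rcases c t)"
  define \<beta> where "\<beta> = 1 / (D * sqrt (N t))"
  have rpos: "rr > 0" using r unfolding rr_def by simp
  have kpos: "Ip * (1 - Sp) > 0" using I S by simp
  have "0 < real (rcases c t) * (Ip * (1 - Sp))" using rpos kpos unfolding rr_def by simp
  hence Npos: "N t > 0" using N_lower[OF I S, of t] by linarith
  have sVeq: "rr * sV = sqrt (N t)"
    unfolding sV_def V_N rr_def[symmetric] using rpos by (simp add: real_sqrt_divide)
  have sVpos: "sV > 0"
  proof -
    have "0 < rr * sV" using sVeq Npos by simp
    thus ?thesis using rpos by (rule zero_less_mult_pos)
  qed
  define a where "a = (\<lambda>j::nat\<times>nat. 1 / (nat_cdf (Q (fst j)) (t - fst j) * rr * sV))"
  define h where "h = (\<lambda>(j::nat\<times>nat) b. Yh t j b / sV)"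
  have fe: "(\<lambda>\<omega>. (CFR_est c (\<lambda>d. nat_cdf (Q d)) X t \<omega> - cfr_true c p t) / sV)
      = (\<lambda>\<omega>. \<Sum>j\<in>J t. h j (X t (fst j) (snd j) \<omega>))"
    by (auto simp: fun_eq_iff eqY Y_def h_def sum_divide_distrib)
  have "char (distr M borel (\<lambda>\<omega>. \<Sum>j\<in>J t. h j (X t (fst j) (snd j) \<omega>))) u
     = (\<Prod>j\<in>J t. char (distr M borel (\<lambda>\<omega>. h j (X t (fst j) (snd j) \<omega>))) u)"
    by (rule char_distr_sum[OF indep_h])
  also have "\<dots> = (\<Prod>j\<in>J t. (1 - of_real (q t (fst j))) * iexp (-u*a j*q t (fst j))
                   + of_real (q t (fst j)) * iexp (u*a j*(1-q t (fst j))))"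
  proof (rule prod.cong[OF refl])
    fix j assume j: "j \<in> J t"
    have F: "nat_cdf (Q (fst j)) (t - fst j) > 0" by (rule F_pos)
    have "char (distr M borel (\<lambda>\<omega>. h j (X t (fst j) (snd j) \<omega>))) u
        = integral\<^sup>L M (\<lambda>\<omega>. iexp (u * h j (X t (fst j) (snd j) \<omega>)))"
      unfolding char_def
      by (rule integral_distr) (auto intro!: measurable_compose[OF measX[OF j]])
    also have "\<dots> = q t (fst j) *\<^sub>R iexp (u * h j True) + (1 - q t (fst j)) *\<^sub>R iexp (u * h j False)"
      by (rule intX[OF j])
    also have "u * h j True = u * a j * (1 - q t (fst j))"
      unfolding h_def Yh_def a_def rr_def[symmetric] using F rpos sVpos by (simp add: field_simps)
    also have "u * h j False = - u * a j * q t (fst j)"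
      unfolding h_def Yh_def a_def rr_def[symmetric] using F rpos sVpos by (simp add: field_simps)
    finally show "char (distr M borel (\<lambda>\<omega>. h j (X t (fst j) (snd j) \<omega>))) u
       = (1 - of_real (q t (fst j))) * iexp (-u*a j*q t (fst j)) + of_real (q t (fst j)) * iexp (u*a j*(1-q t (fst j)))"
      by (simp add: scaleR_conv_of_real)
  qed
  finally have chareq: "char (distr M borel (\<lambda>\<omega>. (CFR_est c (\<lambda>d. nat_cdf (Q d)) X t \<omega> - cfr_true c p t) / sV)) u
     = (\<Prod>j\<in>J t. (1 - of_real (q t (fst j))) * iexp (-u*a j*q t (fst j))
                   + of_real (q t (fst j)) * iexp (u*a j*(1-q t (fst j))))"
    unfolding fe .
  have "cmod ((\<Prod>j\<in>J t. (1 - of_real (q t (fst j))) * iexp (-u*a j*q t (fst j))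
                   + of_real (q t (fst j)) * iexp (u*a j*(1-q t (fst j)))) - of_real (exp (- (u^2) / 2)))
       \<le> \<bar>u\<bar>^3*\<beta>/6 + u^4*\<beta>^2"
  proof (rule clt_core)
    show "finite (J t)" by (rule J_finite)
    show "\<And>j. j \<in> J t \<Longrightarrow> 0 \<le> q t (fst j) \<and> q t (fst j) \<le> 1" using q_range by auto
    fix j assume j: "j \<in> J t"
    have F: "nat_cdf (Q (fst j)) (t - fst j) \<ge> D" by (rule F_ge_D)
    have "\<bar>a j\<bar> = 1 / (nat_cdf (Q (fst j)) (t - fst j) * sqrt (N t))"
      unfolding a_def using F_pos[of "fst j" "t - fst j"] rpos sVpos sVeq Npos by (simp add: mult.assoc abs_mult)
    also have "\<dots> \<le> \<beta>" unfolding \<beta>_def using F Fpos Npos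
      by (intro divide_left_mono mult_right_mono mult_pos_pos) auto
    finally show "\<bar>a j\<bar> \<le> \<beta>" .
  next
    have "(\<Sum>j\<in>J t. (a j)\<^sup>2 * q t (fst j) * (1 - q t (fst j)))
        = (\<Sum>j\<in>J t. q t (fst j) * (1 - q t (fst j)) / (nat_cdf (Q (fst j)) (t - fst j))^2) / (rr * sV)^2"
      unfolding sum_divide_distrib
    proof (rule sum.cong[OF refl])
      fix j :: "nat \<times> nat"
      have F: "nat_cdf (Q (fst j)) (t - fst j) > 0" by (rule F_pos)
      show "(a j)\<^sup>2 * q t (fst j) * (1 - q t (fst j))
          = q t (fst j) * (1 - q t (fst j)) / (nat_cdf (Q (fst j)) (t - fst j))^2 / (rr * sV)^2"
        unfolding a_def using F rpos sVpos by (simp add: power_divide power_mult_distrib)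
    qed
    also have "\<dots> = 1" unfolding N_J sVeq using Npos by simp
    finally show "(\<Sum>j\<in>J t. (a j)\<^sup>2 * q t (fst j) * (1 - q t (fst j))) = 1" .
  qed
  thus ?thesis unfolding chareq[unfolded sV_def] \<beta>_def by simp
qed

lemma part2:
  assumes I: "Ip > 0" and S: "Sp < 1"
  shows "weak_conv_m (\<lambda>t. distr M borel (\<lambda>\<omega>. (CFR_est c (\<lambda>d. nat_cdf (Q d)) X t \<omega> - cfr_true c p t)
                  / sqrt (V_CFR c p (\<lambda>d. nat_cdf (Q d)) t))) std_normal_distribution"
proof (rule levy_continuity)
  fix t
  have "(\<lambda>\<omega>. (CFR_est c (\<lambda>d. nat_cdf (Q d)) X t \<omega> - cfr_true c p t)
                  / sqrt (V_CFR c p (\<lambda>d. nat_cdf (Q d)) t)) \<in> borel_measurable M"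
    unfolding eqY by (intro borel_measurable_divide borel_measurable_sum borel_measurable_const measY)
  thus "real_distribution (distr M borel (\<lambda>\<omega>. (CFR_est c (\<lambda>d. nat_cdf (Q d)) X t \<omega> - cfr_true c p t)
                  / sqrt (V_CFR c p (\<lambda>d. nat_cdf (Q d)) t)))" by simp
next
  show "real_distribution std_normal_distribution" by (rule real_dist_normal_dist)
next
  fix u :: real
  define k where "k = Ip * (1 - Sp)"
  have kpos: "k > 0" using I S unfolding k_def by simp
  define b where "b = (\<lambda>t. inverse (D * sqrt (k * real (rcases c t))))"
  have blim: "b \<longlonglongrightarrow> 0"
  proof -
    have "filterlim (\<lambda>t. k * real (rcases c t)) at_top sequentially"
      by (rule filterlim_tendsto_pos_mult_at_top[OF tendsto_const kpos r_real])
    hence "filterlim (\<lambda>t. sqrt (k * real (rcases c t))) at_top sequentially"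
      by (rule filterlim_compose[OF sqrt_at_top])
    hence "filterlim (\<lambda>t. D * sqrt (k * real (rcases c t))) at_top sequentially"
      by (rule filterlim_tendsto_pos_mult_at_top[OF tendsto_const Fpos])
    thus ?thesis unfolding b_def by (rule tendsto_inverse_0_at_top)
  qed
  have "(\<lambda>t. \<bar>u\<bar>^3 * b t / 6 + u^4 * (b t)^2) \<longlonglongrightarrow> \<bar>u\<bar>^3 * 0 / 6 + u^4 * 0^2"
    by (intro tendsto_intros blim) auto
  hence lim0: "(\<lambda>t. \<bar>u\<bar>^3 * b t / 6 + u^4 * (b t)^2) \<longlonglongrightarrow> 0" by simp
  let ?ch = "\<lambda>t. char (distr M borel (\<lambda>\<omega>. (CFR_est c (\<lambda>d. nat_cdf (Q d)) X t \<omega> - cfr_true c p t)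
                  / sqrt (V_CFR c p (\<lambda>d. nat_cdf (Q d)) t))) u"
  have "(\<lambda>t. norm (?ch t - complex_of_real (exp (- (u^2) / 2)))) \<longlonglongrightarrow> 0"
  proof (rule tendsto_sandwich[OF _ _ tendsto_const lim0])
    show "\<forall>\<^sub>F t in sequentially. 0 \<le> norm (?ch t - complex_of_real (exp (- (u^2) / 2)))" by simp
    show "\<forall>\<^sub>F t in sequentially. norm (?ch t - complex_of_real (exp (- (u^2) / 2))) \<le> \<bar>u\<bar>^3 * b t / 6 + u^4 * (b t)^2"
      using ev_r1
    proof eventually_elim
      case (elim t)
      have rpos: "real (rcases c t) > 0" using elim by simp
      have NL: "k * real (rcases c t) \<le> N t" using N_lower[OF I S, of t] unfolding k_def by (simp add: mult.commute)
      have kr: "k * real (rcases c t) > 0" using kpos rpos by simp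
      have be: "1 / (D * sqrt (N t)) \<le> b t" unfolding b_def inverse_eq_divide
        using NL kr Fpos by (intro divide_left_mono mult_left_mono mult_pos_pos) auto
      have b0: "0 \<le> 1 / (D * sqrt (N t))" using Fpos NL kr by simp
      have "norm (?ch t - complex_of_real (exp (- (u^2) / 2)))
           \<le> \<bar>u\<bar>^3 * (1 / (D * sqrt (N t))) / 6 + u^4 * (1 / (D * sqrt (N t)))^2"
        by (rule char_bound[OF I S elim])
      also have "\<dots> \<le> \<bar>u\<bar>^3 * b t / 6 + u^4 * (b t)^2"
        using be b0 by (intro add_mono divide_right_mono mult_left_mono power_mono) auto
      finally show ?case .
    qed
  qed
  hence "(\<lambda>t. ?ch t - complex_of_real (exp (- (u^2) / 2))) \<longlonglongrightarrow> 0"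
    by (simp only: tendsto_norm_zero_iff)
  hence "?ch \<longlonglongrightarrow> complex_of_real (exp (- (u^2) / 2))" by (rule LIM_zero_cancel)
  thus "?ch \<longlonglongrightarrow> char std_normal_distribution u" by (simp add: char_std_normal_distribution)
qed

end

theorem theorem2:
  fixes M :: "'a measure"
    and c :: "nat \<Rightarrow> nat"
    and p :: "nat \<Rightarrow> real"
    and Q :: "nat \<Rightarrow> nat pmf"
    and X :: "nat \<Rightarrow> nat \<Rightarrow> nat \<Rightarrow> 'a \<Rightarrow> bool"
  assumes "prob_space M"
    and p_range: "\<And>d. 0 \<le> p d \<and> p d \<le> 1"
    and indep: "\<And>t. prob_space.indep_vars M (\<lambda>_. count_space UNIV) (\<lambda>(d, i). X t d i)
                   {(d, i). d \<le> t \<and> 1 \<le> i \<and> i \<le> c d}"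
    and bern: "\<And>t d i. d \<le> t \<Longrightarrow> 1 \<le> i \<Longrightarrow> i \<le> c d \<Longrightarrow>
                 distr M (count_space UNIV) (X t d i)
                   = measure_pmf (bernoulli_pmf (p d * nat_cdf (Q d) (t - d)))"
    and r_infty: "filterlim (rcases c) at_top sequentially"
  shows "((INF d. nat_cdf (Q d) 0) > 0 \<longrightarrow>
           (\<forall>e>0. ((\<lambda>t. measure M {\<omega> \<in> space M.
                 \<bar>CFR_est c (\<lambda>d. nat_cdf (Q d)) X t \<omega> - cfr_true c p t\<bar> > e}) \<longlonglongrightarrow> 0)))
       \<and> ((INF d. nat_cdf (Q d) 0) > 0 \<and> (INF d. p d) > 0 \<and> (SUP d. p d) < 1 \<longrightarrow>
           weak_conv_m
             (\<lambda>t. distr M borel (\<lambda>\<omega>.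
                (CFR_est c (\<lambda>d. nat_cdf (Q d)) X t \<omega> - cfr_true c p t)
                  / sqrt (V_CFR c p (\<lambda>d. nat_cdf (Q d)) t)))
             std_normal_distribution)"
proof (intro conjI impI allI)
  assume F: "(INF d. nat_cdf (Q d) 0) > 0"
  interpret cfr_setting M c p Q X
    using assms F unfolding cfr_setting_def cfr_setting_axioms_def by blast
  fix e :: real assume "e > 0"
  thus "(\<lambda>t. measure M {\<omega> \<in> space M.
                 \<bar>CFR_est c (\<lambda>d. nat_cdf (Q d)) X t \<omega> - cfr_true c p t\<bar> > e}) \<longlonglongrightarrow> 0"
    by (rule part1)
next
  assume H: "(INF d. nat_cdf (Q d) 0) > 0 \<and> (INF d. p d) > 0 \<and> (SUP d. p d) < 1"
  interpret cfr_setting M c p Q X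
    using assms H unfolding cfr_setting_def cfr_setting_axioms_def by blast
  show "weak_conv_m
             (\<lambda>t. distr M borel (\<lambda>\<omega>.
                (CFR_est c (\<lambda>d. nat_cdf (Q d)) X t \<omega> - cfr_true c p t)
                  / sqrt (V_CFR c p (\<lambda>d. nat_cdf (Q d)) t)))
             std_normal_distribution"
    using H by (intro part2) auto
qed


end
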